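(* Let $r,h,g$ be positive integers with $g+h<gr$, and put $n=rg$. Then there exists an MR $(n,r,h,1)$-LRC over a field of size \[\ell\le\left(\max\left\{\tilde O\!\left(\tfrac nr\right),\ 2^r\right\}\right)^{\min\{h,\frac nr\}}.\]
   Context: $\tilde O(f)$ denotes $f\cdot(\log f)^{O(1)}$. Definition: let $\ell$ be a prime power, $a,g,r,h$ positive integers with $ga+h<gr$, $n=gr$, $k=n-ga-h$. An MR (maximally recoverable) $(n,r,h,a)_\ell$-LRC is an $[n,k]$ linear code over $\mathbb{F}_\ell$ with a parity-check matrix $H$ of the block form whose first $ga$ rows are block diagonal with diagonal blocks $A_1,\dots,A_g$ (each $a\times r$, coordinates split into $g$ consecutive groups of size $r$) and whose last $h$ rows are $(D_1|\cdots|D_g)$ with each $D_i$ of size $h\times r$, such that (i) each $A_i$ generates an $[r,a,r-a+1]_\ell$ MDS code, and (ii) every set of $ag+h$ columns of $H$ consisting of any $a$ columns from each group together with any $h$ further columns is linearly independent over $\mathbb{F}_\ell$. "Over a field of size $\ell$" means an MR $(n,r,h,a)_\ell$-LRC. *)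

theory Defs
  imports "HOL-Algebra.Algebra" "HOL-Analysis.Analysis"
begin

text \<open>Matrices over a finite field F (HOL-Algebra record, elements encoded as nat)
are functions nat => nat => nat; row i, column j. The parity-check matrix H has g*a+h rows:
rows t*a..<(t+1)*a form the local block A_t (supported on group t),
rows g*a..<g*a+h form the global part (D_1|...|D_g).\<close>

definition cols_lin_indep :: "nat ring \<Rightarrow> nat \<Rightarrow> (nat \<Rightarrow> nat \<Rightarrow> nat) \<Rightarrow> nat set \<Rightarrow> bool" where
  "cols_lin_indep F m H S \<longleftrightarrow>
     (\<forall>c. c \<in> S \<rightarrow> carrier F \<longrightarrow>
        (\<forall>i<m. finsum F (\<lambda>j. c j \<otimes>\<^bsub>F\<^esub> H i j) S = \<zero>\<^bsub>F\<^esub>) \<longrightarrow>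
        (\<forall>j\<in>S. c j = \<zero>\<^bsub>F\<^esub>))"

text \<open>The a x r matrix A (rows 0..<a, columns 0..<r) generates an [r,a,r-a+1] MDS code:
every nonzero combination of its rows has Hamming weight at least r-a+1
(this forces the rows to be independent, i.e. the code has dimension a).\<close>
definition generates_MDS :: "nat ring \<Rightarrow> nat \<Rightarrow> nat \<Rightarrow> (nat \<Rightarrow> nat \<Rightarrow> nat) \<Rightarrow> bool" where
  "generates_MDS F r a A \<longleftrightarrow>
     (\<forall>x. x \<in> {..<a} \<rightarrow> carrier F \<longrightarrow> (\<exists>s<a. x s \<noteq> \<zero>\<^bsub>F\<^esub>) \<longrightarrow>
        card {j. j < r \<and> finsum F (\<lambda>s. x s \<otimes>\<^bsub>F\<^esub> A s j) {..<a} \<noteq> \<zero>\<^bsub>F\<^esub>} \<ge> r - a + 1)"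

definition group :: "nat \<Rightarrow> nat \<Rightarrow> nat set" where
  "group r t = {t * r..<(t + 1) * r}"

definition MR_LRC :: "nat ring \<Rightarrow> nat \<Rightarrow> nat \<Rightarrow> nat \<Rightarrow> nat \<Rightarrow> (nat \<Rightarrow> nat \<Rightarrow> nat) \<Rightarrow> bool" where
  "MR_LRC F g r h a H \<longleftrightarrow>
     g * a + h < g * r \<and>
     (\<forall>i<g * a + h. \<forall>j<g * r. H i j \<in> carrier F) \<and>
     (\<forall>i<g * a. \<forall>j<g * r. j div r \<noteq> i div a \<longrightarrow> H i j = \<zero>\<^bsub>F\<^esub>) \<and>
     (\<forall>t<g. generates_MDS F r a (\<lambda>s j. H (t * a + s) (t * r + j))) \<and>
     (\<forall>S. S \<subseteq> {..<g * r} \<and> card S = g * a + h \<and> (\<forall>t<g. card (S \<inter> group r t) \<ge> a)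
          \<longrightarrow> cols_lin_indep F (g * a + h) H S)"

end

theory Submission
  imports Defs "HOL-Algebra.Weak_Morphisms" "HOL-Number_Theory.Number_Theory"
begin


abbreviation nprime :: "nat \<Rightarrow> bool" where "nprime \<equiv> Factorial_Ring.prime"

lemma Suc_div_ind: "0 < (q::nat) \<Longrightarrow> Suc n div q = n div q + (if q dvd Suc n then 1 else 0)"
  by (auto simp: div_Suc dvd_eq_mod_eq_0)

lemma mult_le_self: assumes "nprime p" "0 < x" shows "multiplicity p x < x"
proof -
  have "p ^ multiplicity p x dvd x" by (rule multiplicity_dvd)
  hence "p ^ multiplicity p x \<le> x" using assms(2) by (rule dvd_imp_le)
  moreover have "multiplicity p x < p ^ multiplicity p x"
  proof -
    have p1: "p > 1" using prime_gt_1_nat[OF assms(1)] .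
    have "multiplicity p x < 2 ^ multiplicity p x" by (rule less_exp)
    also have "(2::nat) ^ multiplicity p x \<le> p ^ multiplicity p x" using p1 by (intro power_mono) auto
    finally show ?thesis .
  qed
  ultimately show ?thesis by linarith
qed

lemma sum_ind_card: "finite A \<Longrightarrow> (\<Sum>i\<in>A. if P i then 1 else (0::nat)) = card {i\<in>A. P i}"
  using sum.inter_filter[of A "\<lambda>_. 1::nat" P] by simp

lemma legendre:
  assumes p: "nprime p"
  shows "multiplicity p (fact n :: nat) = (\<Sum>i\<in>{1..n}. n div p^i)"
proof (induction n)
  case 0
  then show ?case by simp
next
  case (Suc n)
  have p1: "p > 1" using prime_gt_1_nat[OF p] .
  have pe: "prime_elem p" using p by simp
  have A: "multiplicity p (fact (Suc n) :: nat) = multiplicity p (Suc n) + multiplicity p (fact n :: nat)"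
  proof -
    have "(fact (Suc n)::nat) = Suc n * fact n" by simp
    moreover have "multiplicity p (Suc n * fact n) = multiplicity p (Suc n) + multiplicity p (fact n :: nat)"
      by (rule prime_elem_multiplicity_mult_distrib[OF pe]) auto
    ultimately show ?thesis by (simp only:)
  qed
  have B: "multiplicity p (Suc n) = card {i\<in>{1..Suc n}. p^i dvd Suc n}"
  proof -
    have nu: "\<not> p dvd 1" using p1 by (simp add: nat_dvd_1_iff_1)
    have m: "multiplicity p (Suc n) < Suc n" using mult_le_self[OF p, of "Suc n"] by simp
    have iff: "\<And>i. p^i dvd Suc n \<longleftrightarrow> i \<le> multiplicity p (Suc n)"
      using power_dvd_iff_le_multiplicity[of "Suc n" p] nu by blast
    have "{i\<in>{1..Suc n}. p^i dvd Suc n} = {1..multiplicity p (Suc n)}"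
      using m by (auto simp: iff)
    thus ?thesis by simp
  qed
  have C: "(\<Sum>i\<in>{1..n}. n div p^i) = (\<Sum>i\<in>{1..Suc n}. n div p^i)"
  proof -
    have "n < 2 ^ n" by (rule less_exp)
    also have "(2::nat) ^ n \<le> p ^ n" using p1 by (intro power_mono) auto
    also have "p ^ n < p ^ Suc n" using p1 by simp
    finally have "n < p ^ Suc n" .
    thus ?thesis by simp
  qed
  have D: "(\<Sum>i\<in>{1..Suc n}. Suc n div p^i) =
     (\<Sum>i\<in>{1..Suc n}. n div p^i) + (\<Sum>i\<in>{1..Suc n}. (if p^i dvd Suc n then 1 else 0))"
    unfolding sum.distrib[symmetric] by (rule sum.cong) (use p1 in \<open>auto simp: Suc_div_ind\<close>)
  show ?case using A B C D Suc.IH sum_ind_card[of "{1..Suc n}" "\<lambda>i. p^i dvd Suc n"] by simp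
qed

lemma div2_bounds:
  fixes m q :: nat assumes "q > 0"
  shows "2 * (m div q) \<le> (2*m) div q" "(2*m) div q \<le> 2 * (m div q) + 1"
proof -
  have m: "m = q * (m div q) + m mod q" by simp
  have r: "m mod q < q" using assms by simp
  have "2*m = q * (2*(m div q)) + 2*(m mod q)" using m by (metis add_mult_distrib2 mult.left_commute)
  hence e: "(2*m) div q = 2*(m div q) + (2*(m mod q)) div q" using assms by simp
  have "(2*(m mod q)) div q \<le> 1"
  proof -
    have "2*(m mod q) < q * 2" using r by simp
    hence "(2*(m mod q)) div q < 2" using assms by (simp add: div_less_iff_less_mult)
    thus ?thesis by simp
  qed
  thus "2 * (m div q) \<le> (2*m) div q" "(2*m) div q \<le> 2 * (m div q) + 1" using e by simp_all
qed

lemma mult_central: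
  assumes p: "nprime p"
  shows "multiplicity p ((2*m) choose m) = (\<Sum>i\<in>{1..2*m}. (2*m) div p^i - 2*(m div p^i))"
proof -
  have p1: "p > 1" using prime_gt_1_nat[OF p] .
  have pe: "prime_elem p" using p by simp
  have f: "fact (2*m) = fact m * fact m * ((2*m) choose m)"
    using binomial_fact_lemma[of m "2*m"] by (simp add: mult_2)
  have "multiplicity p (fact (2*m) :: nat) = multiplicity p (fact m * fact m :: nat) + multiplicity p ((2*m) choose m)"
    unfolding f by (rule prime_elem_multiplicity_mult_distrib[OF pe]) (auto simp: mult_2)
  also have "multiplicity p (fact m * fact m :: nat) = 2 * multiplicity p (fact m :: nat)"
    by (subst prime_elem_multiplicity_mult_distrib[OF pe]) auto
  finally have E: "multiplicity p ((2*m) choose m) = multiplicity p (fact (2*m) :: nat) - 2 * multiplicity p (fact m :: nat)"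
    by simp
  have S1: "(\<Sum>i\<in>{1..m}. m div p^i) = (\<Sum>i\<in>{1..2*m}. m div p^i)"
  proof -
    have "\<forall>i\<in>{1..2*m} - {1..m}. m div p^i = 0"
    proof
      fix i assume "i \<in> {1..2*m} - {1..m}"
      hence i: "i > m" by auto
      have "m < 2 ^ m" by (rule less_exp)
      also have "(2::nat) ^ m \<le> p ^ m" using p1 by (intro power_mono) auto
      also have "p ^ m \<le> p ^ i" using p1 i by (intro power_increasing) auto
      finally show "m div p^i = 0" by simp
    qed
    thus ?thesis by (intro sum.mono_neutral_left) auto
  qed
  have "multiplicity p ((2*m) choose m) = (\<Sum>i\<in>{1..2*m}. (2*m) div p^i) - (\<Sum>i\<in>{1..2*m}. 2*(m div p^i))"
    unfolding E legendre[OF p] S1 sum_distrib_left by simp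
  also have "\<dots> = (\<Sum>i\<in>{1..2*m}. (2*m) div p^i - 2*(m div p^i))"
    by (rule sum_subtractf_nat[symmetric]) (use p1 div2_bounds(1) in auto)
  finally show ?thesis .
qed

lemma central_pow_le:
  assumes p: "nprime p" and m: "m \<ge> 1"
  shows "p ^ multiplicity p ((2*m) choose m) \<le> 2*m"
proof (rule ccontr)
  define v where "v = multiplicity p ((2*m) choose m)"
  assume "\<not> p ^ multiplicity p ((2*m) choose m) \<le> 2*m"
  hence big: "p ^ v > 2*m" unfolding v_def by simp
  have p1: "p > 1" using prime_gt_1_nat[OF p] .
  have v1: "v \<ge> 1" using big m by (cases v) auto
  define t where "t i = (2*m) div p^i - 2*(m div p^i)" for i
  have t1: "t i \<le> 1" for i using div2_bounds(2)[of "p^i" m] p1 unfolding t_def by simp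
  have t0: "t i = 0" if "i \<ge> v" for i
  proof -
    have "p^v \<le> p^i" using p1 that by (intro power_increasing) auto
    thus ?thesis using big unfolding t_def by simp
  qed
  have "v = (\<Sum>i\<in>{1..2*m}. t i)" unfolding v_def t_def by (rule mult_central[OF p])
  also have "\<dots> = (\<Sum>i\<in>{1..2*m} \<inter> {..<v}. t i)"
  proof (rule sum.mono_neutral_right)
    show "\<forall>i\<in>{1..2*m} - {1..2*m} \<inter> {..<v}. t i = 0"
    proof
      fix i assume "i \<in> {1..2*m} - {1..2*m} \<inter> {..<v}"
      hence "v \<le> i" by auto
      thus "t i = 0" by (rule t0)
    qed
  qed auto
  also have "\<dots> \<le> (\<Sum>i\<in>{1..<v}. t i)"
    by (rule sum_mono2) auto
  also have "\<dots> \<le> (\<Sum>i\<in>{1..<v}. 1)" by (rule sum_mono) (use t1 in auto)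
  also have "\<dots> = v - 1" by simp
  finally show False using v1 by simp
qed

lemma central_mid_zero:
  assumes p: "nprime p" and m: "m \<ge> 5" and lo: "2*m < 3*p" and hi: "p \<le> m"
  shows "multiplicity p ((2*m) choose m) = 0"
proof -
  have p1: "p > 1" using prime_gt_1_nat[OF p] .
  have "(2*m)*(2*m) < (3*p)*(3*p)" using mult_strict_mono[OF lo lo] p1 by simp
  hence "4*(m*m) < 9*(p*p)" by simp
  moreover have "5*m \<le> m*m" using m by simp
  ultimately have pp: "2*m < p*p" by linarith
  have "(\<Sum>i\<in>{1..2*m}. (2*m) div p^i - 2*(m div p^i)) = 0"
  proof (rule sum.neutral, rule ballI)
    fix i assume "i \<in> {1..2*m}"
    show "(2*m) div p^i - 2*(m div p^i) = 0"
    proof (cases "i = 1")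
      case True
      have b: "m div p = 1"
      proof -
        have "m div p = Suc ((m - p) div p)" using hi p1 by (simp add: le_div_geq)
        moreover have "m - p < p" using lo hi by linarith
        ultimately show ?thesis by simp
      qed
      have a: "(2*m) div p = 2"
      proof -
        have "(2*m) div p = Suc ((2*m - p) div p)" using hi p1 by (simp add: le_div_geq)
        moreover have "(2*m - p) div p = Suc ((2*m - p - p) div p)" using hi p1 by (simp add: le_div_geq)
        moreover have "2*m - p - p < p" using lo hi by linarith
        ultimately show ?thesis by simp
      qed
      show ?thesis using True a b by simp
    next
      case False
      hence "i \<ge> 2" using \<open>i \<in> {1..2*m}\<close> by auto
      hence "p*p \<le> p^i" using p1 by (metis power2_eq_square power_increasing less_imp_le_nat zero_less_one order_less_trans)
      thus ?thesis using pp by simp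
    qed
  qed
  thus ?thesis using mult_central[OF p] by simp
qed

lemma central_lower: "4^m \<le> (2*m+1) * ((2*m) choose m)"
proof -
  have "(4::nat)^m = 2^(2*m)" by (simp add: power_mult)
  also have "\<dots> = (\<Sum>k\<le>2*m. (2*m) choose k)" by (simp add: choose_row_sum)
  also have "\<dots> \<le> (\<Sum>k\<le>2*m. (2*m) choose m)" by (rule sum_mono) (rule binomial_maximum')
  also have "\<dots> = (2*m+1) * ((2*m) choose m)" by simp
  finally show ?thesis .
qed

lemma prod_primes_dvd:
  fixes n :: nat
  assumes "finite A" "\<And>p. p \<in> A \<Longrightarrow> nprime p" "\<And>p. p \<in> A \<Longrightarrow> p dvd n"
  shows "\<Prod>A dvd n"
  using assms
proof (induction A rule: finite_induct)
  case empty
  then show ?case by simp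
next
  case (insert x F)
  have px: "nprime x" using insert by simp
  have "\<not> x dvd \<Prod>F"
  proof
    assume "x dvd \<Prod>F"
    then obtain y where y: "y \<in> F" "x dvd y" using prime_dvd_prod_iff[OF insert(1) px, of id] by auto
    have "nprime y" using insert y by simp
    hence "x = y" using y px by (simp add: primes_dvd_imp_eq)
    thus False using y insert(2) by simp
  qed
  hence cop: "coprime x (\<Prod>F)" using px by (simp add: prime_imp_coprime)
  have "x dvd n" "\<Prod>F dvd n" using insert by auto
  hence "x * \<Prod>F dvd n" using cop by (rule divides_mult)
  thus ?case using insert by simp
qed

definition primorial :: "nat \<Rightarrow> nat" where "primorial n = \<Prod>{p. p \<le> n \<and> nprime p}"

lemma primorial_le: "primorial n \<le> 4 ^ n"
proof (induction n rule: less_induct)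
  case (less n)
  show ?case
  proof (cases "n \<le> 2")
    case True
    have sub: "{p. p \<le> n \<and> nprime p} \<subseteq> {2}"
    proof
      fix x assume x: "x \<in> {p. p \<le> n \<and> nprime p}"
      hence "x \<ge> 2" using prime_ge_2_nat by blast
      thus "x \<in> {2}" using x True by simp
    qed
    have "primorial n \<le> \<Prod>{2::nat}" unfolding primorial_def
      by (rule dvd_imp_le[OF prod_dvd_prod_subset[OF _ sub]]) auto
    also have "\<dots> \<le> 4 ^ 1" by simp
    finally have a: "primorial n \<le> 4 ^ 1" .
    show ?thesis
    proof (cases "n = 0")
      case True
      hence e: "{p. p \<le> n \<and> nprime p} = {}" using prime_ge_2_nat by fastforce
      show ?thesis unfolding primorial_def e by simp
    next
      case False
      have "(4::nat) ^ 1 \<le> 4 ^ n" using False by (intro power_increasing) auto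
      thus ?thesis using a by linarith
    qed
  next
    case False
    show ?thesis
    proof (cases "even n")
      case True
      have np: "\<not> nprime n"
      proof
        assume "nprime n"
        hence "odd n" using False prime_odd_nat[of n] by simp
        thus False using True by simp
      qed
      have ne: "\<And>x. nprime x \<Longrightarrow> x \<noteq> n" using np by auto
      have "{p. p \<le> n \<and> nprime p} = {p. p \<le> n - 1 \<and> nprime p}"
      proof (rule Collect_cong)
        fix x show "(x \<le> n \<and> nprime x) = (x \<le> n - 1 \<and> nprime x)"
          using ne[of x] by linarith
      qed
      hence "primorial n = primorial (n-1)" unfolding primorial_def by simp
      also have "\<dots> \<le> 4^(n-1)" using less False by simp
      also have "\<dots> \<le> 4^n" by (intro power_increasing) auto
      finally show ?thesis .
    next
      case odd: False
      then obtain k where k: "n = 2*k+1" by (metis oddE)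
      have k1: "k \<ge> 1" using False k by simp
      have kn: "k + 1 < n" using k k1 by simp
      have split: "{p. p \<le> n \<and> nprime p} = {p. p \<le> k+1 \<and> nprime p} \<union> {p. k+1 < p \<and> p \<le> n \<and> nprime p}"
        using kn by auto
      have disj: "{p. p \<le> k+1 \<and> nprime p} \<inter> {p. k+1 < p \<and> p \<le> n \<and> nprime p} = {}" by auto
      have P: "primorial n = primorial (k+1) * \<Prod>{p. k+1 < p \<and> p \<le> n \<and> nprime p}"
        unfolding primorial_def split by (rule prod.union_disjoint) (auto simp: disj)
      have IH: "primorial (k+1) \<le> 4^(k+1)" using less.IH[of "k+1"] kn by simp
      define C where "C = (2*k+1) choose k"
      have Q: "\<Prod>{p. k+1 < p \<and> p \<le> n \<and> nprime p} \<le> C"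
      proof (rule dvd_imp_le)
        show "\<Prod>{p. k+1 < p \<and> p \<le> n \<and> nprime p} dvd C"
        proof (rule prod_primes_dvd)
          fix p assume p: "p \<in> {p. k+1 < p \<and> p \<le> n \<and> nprime p}"
          hence pp: "nprime p" by simp
          have fn: "fact n = fact k * fact (k+1) * C"
            using binomial_fact_lemma[of k "2*k+1"] k unfolding C_def by (simp add: mult_2 del: fact_Suc)
          have "p dvd fact n" using p by (subst prime_dvd_fact_iff[OF pp]) simp
          hence d: "p dvd fact k * fact (k+1) * C" by (simp only: fn)
          have n1: "\<not> p dvd fact k" using p by (subst prime_dvd_fact_iff[OF pp]) simp
          have n2: "\<not> p dvd fact (k+1)" using p by (subst prime_dvd_fact_iff[OF pp]) simp
          show "p dvd C" using d n1 n2 pp by (simp only: prime_dvd_mult_iff) blast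
        qed auto
        show "C > 0" unfolding C_def by simp
      qed
      have CB: "C \<le> 4^k"
      proof -
        have sym: "(2*k+1) choose (k+1) = C" unfolding C_def
          using binomial_symmetric[of k "2*k+1"] by (simp del: binomial_Suc_Suc)
        have "(\<Sum>i\<in>{k,k+1}. (2*k+1) choose i) \<le> (\<Sum>i\<le>2*k+1. (2*k+1) choose i)"
          by (rule sum_mono2) auto
        also have "\<dots> = 2^(2*k+1)" by (rule choose_row_sum)
        also have "\<dots> = 2 * 4^k" by (simp add: power_mult)
        finally have "C + C \<le> 2 * 4^k" using sym unfolding C_def by (simp del: binomial_Suc_Suc)
        thus ?thesis by simp
      qed
      have "primorial n \<le> 4^(k+1) * 4^k" unfolding P using IH Q CB by (intro mult_mono) auto
      also have "(4::nat)^(k+1) * 4^k = 4^n" using k by (simp add: power_add[symmetric])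
      finally show ?thesis .
    qed
  qed
qed

lemma exp_beats: "k \<ge> 7 \<Longrightarrow> 6*((k+1)*(1+2^(k+1))) < (4::nat)^k"
proof (induction k rule: nat_induct_at_least)
  case base
  then show ?case by simp
next
  case (Suc k)
  define x where "x = (2::nat)^(k+1)"
  have e: "(2::nat)^(Suc k + 1) = 2*x" by (simp add: x_def)
  have a: "Suc k+1 \<le> 2*(k+1)" by simp
  have b: "1 + 2*x \<le> 2*(1+x)" by simp
  have "(Suc k+1)*(1+2*x) \<le> (2*(k+1))*(2*(1+x))" using a b by (rule mult_mono) auto
  also have "\<dots> = 4*((k+1)*(1+x))" by simp
  finally have c: "(Suc k+1)*(1+2*x) \<le> 4*((k+1)*(1+x))" .
  have "6*((k+1)*(1+x)) < 4^k" using Suc.IH unfolding x_def .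
  hence "6*((Suc k+1)*(1+2*x)) < 4 * 4^k" using c by linarith
  thus ?case unfolding e by simp
qed

lemma bertrand_large:
  assumes m: "m \<ge> 8192"
  shows "\<exists>p. nprime p \<and> m < p \<and> p \<le> 2*m"
proof (rule ccontr)
  assume "\<not> ?thesis"
  hence H: "\<And>p. nprime p \<Longrightarrow> m < p \<Longrightarrow> \<not> p \<le> 2*m" by blast
  define C where "C = (2*m) choose m"
  have C0: "C > 0" unfolding C_def by simp
  define PF where "PF = prime_factors C"
  define v where "v p = multiplicity p C" for p
  have finPF: "finite PF" unfolding PF_def by simp
  have Cprod: "C = (\<Prod>p\<in>PF. p ^ v p)" unfolding PF_def v_def using prime_factorization_nat[OF C0] .
  obtain k where k: "4^k \<le> 2*m" "2*m < 4^(k+1)" using ex_power_ivl1[of 4 "2*m"] m by auto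
  have k7: "k \<ge> 7"
  proof (rule ccontr)
    assume "\<not> k \<ge> 7"
    hence "(4::nat)^(k+1) \<le> 4^7" by (intro power_increasing) auto
    thus False using k m by simp
  qed
  have PFprop: "nprime p \<and> 3*p \<le> 2*m \<and> p ^ v p \<le> 2*m \<and> v p \<ge> 1" if "p \<in> PF" for p
  proof -
    have pp: "nprime p" and pd: "p dvd C" using that unfolding PF_def by auto
    have "multiplicity p C \<noteq> 0" using multiplicity_eq_zero_iff[of C p] pd C0 prime_gt_1_nat[OF pp] by simp
    hence v1: "v p \<ge> 1" unfolding v_def by simp
    have pv: "p ^ v p \<le> 2*m" unfolding v_def C_def using central_pow_le[OF pp] m by simp
    have "p \<le> p ^ v p" using power_increasing[of 1 "v p" p] v1 prime_gt_1_nat[OF pp] by simp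
    hence "p \<le> 2*m" using pv by linarith
    hence pm: "p \<le> m" using H[OF pp] by linarith
    have "3*p \<le> 2*m"
    proof (rule ccontr)
      assume "\<not> 3*p \<le> 2*m"
      hence "multiplicity p ((2*m) choose m) = 0" using central_mid_zero[OF pp _ _ pm] m by simp
      thus False using v1 unfolding v_def C_def by simp
    qed
    thus ?thesis using pp pv v1 by simp
  qed
  define A where "A = {p\<in>PF. p*p \<le> 2*m}"
  define B where "B = {p\<in>PF. \<not> p*p \<le> 2*m}"
  have AB: "PF = A \<union> B" "A \<inter> B = {}" unfolding A_def B_def by auto
  have finA: "finite A" and finB: "finite B" using finPF AB by auto
  have "C = (\<Prod>p\<in>A. p ^ v p) * (\<Prod>p\<in>B. p ^ v p)"
    unfolding Cprod AB(1) by (rule prod.union_disjoint[OF finA finB AB(2)])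
  also have "(\<Prod>p\<in>A. p ^ v p) \<le> (\<Prod>p\<in>A. 2*m)"
    by (rule prod_mono) (use PFprop in \<open>auto simp: A_def\<close>)
  also have "\<dots> = (2*m) ^ card A" by simp
  also have "\<dots> \<le> (2*m) ^ (2^(k+1))"
  proof (rule power_increasing)
    have "A \<subseteq> {..<2^(k+1)}"
    proof
      fix p assume "p \<in> A"
      hence pp: "p*p \<le> 2*m" unfolding A_def by simp
      show "p \<in> {..<2^(k+1)}"
      proof (rule ccontr)
        assume "p \<notin> {..<2^(k+1)}"
        hence "2^(k+1) \<le> p" by simp
        hence "2^(k+1) * 2^(k+1) \<le> p * p" by (intro mult_mono) auto
        also have "(2::nat)^(k+1) * 2^(k+1) = 4^(k+1)" by (simp add: power_mult_distrib[symmetric])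
        finally show False using pp k by simp
      qed
    qed
    thus "card A \<le> 2^(k+1)" using card_mono[of "{..<2^(k+1)}" A] by simp
  qed (use m in simp)
  also have "(\<Prod>p\<in>B. p ^ v p) \<le> (\<Prod>p\<in>B. p)"
  proof (rule prod_mono)
    fix p assume pB: "p \<in> B"
    hence pF: "p \<in> PF" and pp2: "\<not> p*p \<le> 2*m" unfolding B_def by auto
    have "v p < 2"
    proof (rule ccontr)
      assume "\<not> v p < 2"
      hence "p^2 \<le> p ^ v p" using prime_gt_1_nat[of p] PFprop[OF pF] by (intro power_increasing) auto
      thus False using PFprop[OF pF] pp2 by (simp add: power2_eq_square)
    qed
    hence "v p = 1" using PFprop[OF pF] by simp
    thus "0 \<le> p ^ v p \<and> p ^ v p \<le> p" by simp
  qed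
  also have "(\<Prod>p\<in>B. p) \<le> primorial (2*m div 3)"
  proof (rule dvd_imp_le)
    have "B \<subseteq> {p. p \<le> 2*m div 3 \<and> nprime p}"
    proof
      fix p assume "p \<in> B"
      hence "nprime p" "3*p \<le> 2*m" using PFprop unfolding B_def by auto
      moreover have "p \<le> 2*m div 3" using \<open>3*p \<le> 2*m\<close> by (simp add: less_eq_div_iff_mult_less_eq mult.commute)
      ultimately show "p \<in> {p. p \<le> 2*m div 3 \<and> nprime p}" by simp
    qed
    thus "(\<Prod>p\<in>B. p) dvd primorial (2*m div 3)" unfolding primorial_def
      by (intro prod_dvd_prod_subset) auto
    show "primorial (2*m div 3) > 0" unfolding primorial_def
      by (rule prod_pos) (use prime_gt_0_nat in auto)
  qed
  also have "primorial (2*m div 3) \<le> 4^(2*m div 3)" by (rule primorial_le)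
  finally have Cb: "C \<le> (2*m) ^ (2^(k+1)) * 4^(2*m div 3)" by simp
  have "(4::nat)^m \<le> (2*m+1) * C" unfolding C_def by (rule central_lower)
  also have "\<dots> \<le> 4^(k+1) * ((4^(k+1)) ^ (2^(k+1)) * 4^(2*m div 3))"
  proof -
    have X: "(2*m)^(2^(k+1)) \<le> ((4::nat)^(k+1))^(2^(k+1))" by (rule power_mono) (use k in auto)
    have Y: "C \<le> (4^(k+1))^(2^(k+1)) * 4^(2*m div 3)" using Cb X by (meson le_trans mult_le_mono1)
    have Z: "2*m+1 \<le> 4^(k+1)" using k by simp
    show ?thesis by (rule mult_mono[OF Z Y]) auto
  qed
  also have "\<dots> = 4^((k+1) + (k+1)*2^(k+1) + 2*m div 3)"
    by (simp add: power_add power_mult)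
  finally have "m \<le> (k+1) + (k+1)*2^(k+1) + 2*m div 3"
    by (rule power_le_imp_le_exp[rotated]) simp
  hence "m \<le> 3*((k+1)*(1+2^(k+1)))" by (simp add: algebra_simps)
  hence "(4::nat)^k \<le> 6*(k+1)*(1+2^(k+1))" using k by linarith
  thus False using exp_beats[OF k7] by (simp add: algebra_simps)
qed

fun nodiv :: "nat \<Rightarrow> nat \<Rightarrow> nat \<Rightarrow> bool" where
  "nodiv n d k = (if k = 0 then True else (n mod d \<noteq> 0 \<and> nodiv n (d+1) (k-1)))"
declare nodiv.simps[simp del]
lemma nodiv_correct: "nodiv n d k \<Longrightarrow> e \<in> {d..<d+k} \<Longrightarrow> \<not> e dvd n"
proof (induction n d k rule: nodiv.induct)
  case (1 n d k)
  show ?case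
  proof (cases "k = 0")
    case True thus ?thesis using 1 by simp
  next
    case False
    hence h: "n mod d \<noteq> 0" "nodiv n (d+1) (k-1)" using "1.prems"(1) nodiv.simps[of n d k] by auto
    show ?thesis
    proof (cases "e = d")
      case True thus ?thesis using h by (simp add: dvd_eq_mod_eq_0)
    next
      case False2: False
      hence "e \<in> {d+1..<d+1+(k-1)}" using "1.prems"(2) False by auto
      thus ?thesis using "1.IH"[OF False h(2)] by simp
    qed
  qed
qed

lemma prime_by_nodiv:
  fixes n :: nat
  assumes "1 < n" "n < sb * sb" "2 \<le> sb" "nodiv n 2 (sb-2)"
  shows "nprime n"
proof (rule ccontr)
  assume np: "\<not> nprime n"
  then obtain d where d: "d dvd n" "d \<noteq> 1" "d \<noteq> n" using assms(1) by (auto simp: prime_nat_iff)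
  obtain e where e: "n = d * e" using d(1) by blast
  have d1: "d > 1" using d e assms(1) by (cases d) auto
  have e1: "e > 1" using d e assms(1) by (cases e) auto
  define f where "f = min d e"
  have fd: "f dvd n" unfolding f_def using e by (simp add: min_def)
  have "f*f \<le> d*e" unfolding f_def by (intro mult_mono) auto
  hence "f*f < sb * sb" using e assms(2) by simp
  hence "f < sb" by (meson le_less_trans mult_le_mono not_le)
  moreover have "f \<ge> 2" unfolding f_def using d1 e1 by simp
  ultimately have "f \<in> {2..<2+(sb-2)}" using assms(3) by simp
  thus False using nodiv_correct[OF assms(4)] fd by blast
qed

lemma prime_2: "nprime 2"
  by (rule prime_by_nodiv[where sb=2]) (simp_all add: nodiv.simps)

lemma prime_3: "nprime 3"
  by (rule prime_by_nodiv[where sb=2]) (simp_all add: nodiv.simps)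

lemma prime_5: "nprime 5"
  by (rule prime_by_nodiv[where sb=3]) (simp_all add: nodiv.simps)

lemma prime_7: "nprime 7"
  by (rule prime_by_nodiv[where sb=3]) (simp_all add: nodiv.simps)

lemma prime_13: "nprime 13"
  by (rule prime_by_nodiv[where sb=4]) (simp_all add: nodiv.simps)

lemma prime_23: "nprime 23"
  by (rule prime_by_nodiv[where sb=5]) (simp_all add: nodiv.simps)

lemma prime_43: "nprime 43"
  by (rule prime_by_nodiv[where sb=7]) (simp_all add: nodiv.simps)

lemma prime_83: "nprime 83"
  by (rule prime_by_nodiv[where sb=10]) (simp_all add: nodiv.simps)

lemma prime_163: "nprime 163"
  by (rule prime_by_nodiv[where sb=13]) (simp_all add: nodiv.simps)

lemma prime_317: "nprime 317"
  by (rule prime_by_nodiv[where sb=18]) (simp_all add: nodiv.simps)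

lemma prime_631: "nprime 631"
  by (rule prime_by_nodiv[where sb=26]) (simp_all add: nodiv.simps)

lemma prime_1259: "nprime 1259"
  by (rule prime_by_nodiv[where sb=36]) (simp_all add: nodiv.simps)

lemma prime_2503: "nprime 2503"
  by (rule prime_by_nodiv[where sb=51]) (simp_all add: nodiv.simps)

lemma prime_5003: "nprime 5003"
  by (rule prime_by_nodiv[where sb=71]) (simp_all add: nodiv.simps)

lemma prime_9973: "nprime 9973"
  by (rule prime_by_nodiv[where sb=100]) (simp_all add: nodiv.simps)

lemma bertrand_small:
  assumes "1 \<le> m" "m < 8192"
  shows "\<exists>p. nprime p \<and> m < p \<and> p \<le> 2*m"
proof -
  have c: "\<exists>p. nprime p \<and> m < p \<and> p \<le> 2*m" if "nprime q" "p \<le> m" "m < q" "q \<le> 2*p" for p q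
    using that by (intro exI[of _ q]) auto
  show ?thesis
  proof (rule ccontr)
    assume N: "\<not> ?thesis"
    have L0: "2 \<le> m" proof (rule ccontr) assume "\<not> 2 \<le> m" thus False using N assms(1) c[where q=2 and p=1, OF prime_2] by simp qed
    have L1: "3 \<le> m" proof (rule ccontr) assume "\<not> 3 \<le> m" thus False using N L0 c[where q=3 and p=2, OF prime_3] by simp qed
    have L2: "5 \<le> m" proof (rule ccontr) assume "\<not> 5 \<le> m" thus False using N L1 c[where q=5 and p=3, OF prime_5] by simp qed
    have L3: "7 \<le> m" proof (rule ccontr) assume "\<not> 7 \<le> m" thus False using N L2 c[where q=7 and p=5, OF prime_7] by simp qed
    have L4: "13 \<le> m" proof (rule ccontr) assume "\<not> 13 \<le> m" thus False using N L3 c[where q=13 and p=7, OF prime_13] by simp qed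
    have L5: "23 \<le> m" proof (rule ccontr) assume "\<not> 23 \<le> m" thus False using N L4 c[where q=23 and p=13, OF prime_23] by simp qed
    have L6: "43 \<le> m" proof (rule ccontr) assume "\<not> 43 \<le> m" thus False using N L5 c[where q=43 and p=23, OF prime_43] by simp qed
    have L7: "83 \<le> m" proof (rule ccontr) assume "\<not> 83 \<le> m" thus False using N L6 c[where q=83 and p=43, OF prime_83] by simp qed
    have L8: "163 \<le> m" proof (rule ccontr) assume "\<not> 163 \<le> m" thus False using N L7 c[where q=163 and p=83, OF prime_163] by simp qed
    have L9: "317 \<le> m" proof (rule ccontr) assume "\<not> 317 \<le> m" thus False using N L8 c[where q=317 and p=163, OF prime_317] by simp qed
    have L10: "631 \<le> m" proof (rule ccontr) assume "\<not> 631 \<le> m" thus False using N L9 c[where q=631 and p=317, OF prime_631] by simp qed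
    have L11: "1259 \<le> m" proof (rule ccontr) assume "\<not> 1259 \<le> m" thus False using N L10 c[where q=1259 and p=631, OF prime_1259] by simp qed
    have L12: "2503 \<le> m" proof (rule ccontr) assume "\<not> 2503 \<le> m" thus False using N L11 c[where q=2503 and p=1259, OF prime_2503] by simp qed
    have L13: "5003 \<le> m" proof (rule ccontr) assume "\<not> 5003 \<le> m" thus False using N L12 c[where q=5003 and p=2503, OF prime_5003] by simp qed
    show False using N L13 assms(2) c[where q=9973 and p=5003, OF prime_9973] by simp
  qed
qed

lemma bertrand: "1 \<le> m \<Longrightarrow> \<exists>p. nprime p \<and> m < p \<and> p \<le> 2*m"
  using bertrand_small bertrand_large by (cases "m < 8192") auto



lemma pow4_le_exp: "r \<ge> 16 \<Longrightarrow> (r::nat)^4 \<le> 2^r"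
proof (induction r rule: nat_induct_at_least)
  case base
  then show ?case by simp
next
  case (Suc n)
  have "(Suc n)^4 \<le> 2 * n^4"
  proof -
    have "(Suc n)^4 = n^4 + 4*n^3 + 6*n^2 + 4*n + 1" by (simp add: power_def eval_nat_numeral algebra_simps)
    also have "4*n^3 + 6*n^2 + 4*n + 1 \<le> n^4"
    proof -
      have "16*n^3 \<le> n*n^3" using Suc.hyps by (intro mult_right_mono) auto
      hence a: "16*n^3 \<le> n^4" by (simp add: power_def eval_nat_numeral)
      have "n^2 \<le> n^3" "n \<le> n^3" "1 \<le> n^3" using Suc.hyps by (auto simp: power_def eval_nat_numeral)
      thus ?thesis using a by linarith
    qed
    hence "n^4 + 4*n^3 + 6*n^2 + 4*n + 1 \<le> 2 * n^4" by linarith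
    finally show ?thesis .
  qed
  also have "\<dots> \<le> 2 * 2^n" using Suc.IH by simp
  finally show ?case by simp
qed

lemma ln2_ge_half: "ln (2::real) \<ge> 1/2"
proof -
  have "norm (exp (1/2::real)) \<le> 2" by (rule exp_bound_half) simp
  hence "exp (1/2::real) \<le> 2" by simp
  hence "ln (exp (1/2::real)) \<le> ln 2" by (subst ln_le_cancel_iff) auto
  thus ?thesis by simp
qed

lemma r_bound:
  fixes g r :: nat
  assumes g: "g \<ge> 1" and lt: "2^r < 4*g*r^2"
  shows "real r \<le> 16 * (1 + ln (real g))"
proof (cases "r \<le> 16")
  case True
  have "ln (real g) \<ge> 0" using g by simp
  moreover have "real r \<le> 16" using True by simp
  ultimately show ?thesis by (simp add: algebra_simps)
next
  case False
  hence r4: "r^4 \<le> 2^r" by (intro pow4_le_exp) simp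
  have "(2^r) * (2^r) < (4*g*r^2) * (4*g*r^2)" using lt g False by (intro mult_strict_mono) auto
  also have "\<dots> = 16*g^2 * r^4" by (simp add: power_def eval_nat_numeral algebra_simps)
  also have "\<dots> \<le> 16*g^2 * 2^r" using r4 by simp
  finally have "(2::nat)^r < 16*g^2" by simp
  hence "real (2^r) < real (16*g^2)" by linarith
  hence "(2::real)^r < 16 * (real g)^2" by simp
  hence "ln ((2::real)^r) < ln (16 * (real g)^2)" using g by (subst ln_less_cancel_iff) auto
  hence "real r * ln 2 < ln 16 + 2 * ln (real g)" using g by (simp add: ln_mult ln_realpow)
  moreover have "ln (16::real) = 4 * ln 2" using ln_realpow[of 2 4] by simp
  ultimately have "real r * ln 2 < 4 * ln 2 + 2 * ln (real g)" by simp
  hence "(real r - 4) * ln 2 < 2 * ln (real g)" by (simp add: algebra_simps)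
  moreover have "ln (real g) \<ge> 0" using g by simp
  ultimately have "real r - 4 < 4 * ln (real g)"
  proof -
    assume A1: "(real r - 4) * ln 2 < 2 * ln (real g)" and A2: "ln (real g) \<ge> 0"
    show ?thesis
    proof (rule ccontr)
      assume "\<not> real r - 4 < 4 * ln (real g)"
      hence B: "real r - 4 \<ge> 4 * ln (real g)" by simp
      hence "real r - 4 \<ge> 0" using A2 by linarith
      hence "(real r - 4) * (1/2) \<le> (real r - 4) * ln 2" by (rule mult_left_mono[OF ln2_ge_half])
      thus False using A1 B by (simp add: algebra_simps)
    qed
  qed
  hence "real r < 4 + 4 * ln (real g)" by linarith
  moreover have "16 * (1 + ln (real g)) = 16 + 16 * ln (real g)" by simp
  ultimately show ?thesis using \<open>ln (real g) \<ge> 0\<close> by linarith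
qed

lemma base_bound:
  fixes g r :: nat
  assumes g: "g \<ge> 1" and r: "r \<ge> 1"
  shows "4 * real g * real r ^ 2 \<le> max (1024 * real g * (1 + ln (real g)) powr 1024) (2 ^ r)"
proof (cases "2^r < 4*g*r^2")
  case False
  hence "real (4*g*r^2) \<le> real (2^r)" by linarith
  thus ?thesis by simp
next
  case True
  have rb: "real r \<le> 16 * (1 + ln (real g))" by (rule r_bound[OF g True])
  have L: "1 + ln (real g) \<ge> 1" using g by simp
  have "real r ^ 2 \<le> (16 * (1 + ln (real g)))^2" using rb by (intro power_mono) auto
  hence "4 * real g * real r ^ 2 \<le> 4 * real g * (16 * (1 + ln (real g)))^2" using g by simp
  also have "\<dots> = 1024 * real g * (1 + ln (real g))^2" by (subst power_mult_distrib) simp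
  also have "(1 + ln (real g))^2 = (1 + ln (real g)) powr 2" using L by (simp add: powr_realpow)
  also have "\<dots> \<le> (1 + ln (real g)) powr 1024" using L by (intro powr_mono) auto
  finally have "4 * real g * real r ^ 2 \<le> 1024 * real g * (1 + ln (real g)) powr 1024" using g by simp
  thus ?thesis by simp
qed



lemma card_small_subsets:
  "card {V. V \<subseteq> {..<(n::nat)} \<and> card V \<le> h} \<le> (n+1)^h"
proof -
  have eq: "{V. V \<subseteq> {..<n} \<and> card V \<le> h} = (\<Union>i\<in>{..h}. {V. V \<subseteq> {..<n} \<and> card V = i})" by auto
  have "card {V. V \<subseteq> {..<n} \<and> card V \<le> h} \<le> (\<Sum>i\<in>{..h}. card {V. V \<subseteq> {..<n} \<and> card V = i})"
    unfolding eq by (rule card_UN_le) simp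
  also have "\<dots> = (\<Sum>i\<le>h. n choose i)" by (simp add: n_subsets)
  also have "\<dots> \<le> (\<Sum>i\<le>h. (h choose i) * n^i)"
  proof (rule sum_mono)
    fix i assume i: "i \<in> {..h}"
    have "n choose i \<le> n^i"
    proof (cases "i \<le> n")
      case True thus ?thesis by (rule binomial_le_pow)
    next
      case False thus ?thesis by (simp add: binomial_eq_0)
    qed
    also have "n^i \<le> (h choose i) * n^i"
    proof -
      have "i \<le> h" using i by simp
      hence "h choose i > 0" by (rule zero_less_binomial)
      hence "h choose i \<ge> 1" by linarith
      thus ?thesis by simp
    qed
    finally show "n choose i \<le> (h choose i) * n^i" .
  qed
  also have "\<dots> = (n+1)^h" using binomial_ring[of n 1 h] by (simp add: mult.commute)
  finally show ?thesis .
qed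

locale mrc = field F for F :: "nat ring" (structure) +
  fixes g r h :: nat
  assumes r_pos: "0 < r" and g_pos: "0 < g"
begin

definition Hm :: "(nat \<Rightarrow> nat \<Rightarrow> nat) \<Rightarrow> nat \<Rightarrow> nat \<Rightarrow> nat" where
  "Hm U i j = (if i < g then (if j div r = i then \<one> else \<zero>) else U j (i - g))"

definition ng :: "nat set \<Rightarrow> nat" where "ng S = card ((\<lambda>j. j div r) ` S)"

definition nosing :: "nat set \<Rightarrow> bool" where
  "nosing S \<longleftrightarrow> (\<forall>j\<in>S. \<exists>j'\<in>S. j' \<noteq> j \<and> j' div r = j div r)"

definition indep :: "(nat \<Rightarrow> nat \<Rightarrow> nat) \<Rightarrow> nat set \<Rightarrow> bool" where
  "indep U S \<longleftrightarrow> cols_lin_indep F (g+h) (Hm U) S"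

definition okU :: "(nat \<Rightarrow> nat \<Rightarrow> nat) \<Rightarrow> bool" where
  "okU U \<longleftrightarrow> (\<forall>j i. U j i \<in> carrier F)"

lemma Hm_carrier: "okU U \<Longrightarrow> Hm U i j \<in> carrier F"
  unfolding Hm_def okU_def by auto

lemma indep_def2: "indep U S \<longleftrightarrow> (\<forall>c. c \<in> S \<rightarrow> carrier F \<longrightarrow>
        (\<forall>i<g+h. (\<Oplus>j\<in>S. c j \<otimes> Hm U i j) = \<zero>) \<longrightarrow> (\<forall>j\<in>S. c j = \<zero>))"
  unfolding indep_def cols_lin_indep_def by simp

lemma indep_cong:
  assumes "okU U" "okU U'" "\<And>j i. j \<in> S \<Longrightarrow> U j i = U' j i"
  shows "indep U S \<longleftrightarrow> indep U' S"
proof -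
  have "(\<Oplus>j\<in>S. c j \<otimes> Hm U i j) = (\<Oplus>j\<in>S. c j \<otimes> Hm U' i j)" if "c \<in> S \<rightarrow> carrier F" for c i
    by (rule finsum_cong') (use that assms in \<open>auto simp: Hm_def okU_def Pi_iff\<close>)
  thus ?thesis unfolding indep_def2 by simp
qed

lemma sum_local:
  assumes "finite S" "c \<in> S \<rightarrow> carrier F"
  shows "(\<Oplus>j\<in>S. c j \<otimes> (if j div r = t then \<one> else \<zero>)) = (\<Oplus>j\<in>{j\<in>S. j div r = t}. c j)"
proof (rule add.finprod_mono_neutral_cong_right)
  show "finite S" by fact
  show "{j\<in>S. j div r = t} \<subseteq> S" by auto
  show "\<And>i. i \<in> S - {j\<in>S. j div r = t} \<Longrightarrow> c i \<otimes> (if i div r = t then \<one> else \<zero>) = \<zero>"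
    using assms(2) by (auto simp: Pi_iff)
  show "\<And>x. x \<in> {j\<in>S. j div r = t} \<Longrightarrow> c x \<otimes> (if x div r = t then \<one> else \<zero>) = c x"
    using assms(2) by (auto simp: Pi_iff)
  show "(\<lambda>j. c j \<otimes> (if j div r = t then \<one> else \<zero>)) \<in> S \<rightarrow> carrier F"
    using assms(2) by auto
qed


lemma sing_remove:
  assumes U: "okU U" and fin: "finite S" and s: "s \<in> S" and sg: "s div r < g"
    and uniq: "\<And>j. j \<in> S \<Longrightarrow> j div r = s div r \<Longrightarrow> j = s"
    and ind: "indep U (S - {s})"
  shows "indep U S"
  unfolding indep_def2
proof (intro allI impI)
  fix c assume c: "c \<in> S \<rightarrow> carrier F" and z: "\<forall>i<g+h. (\<Oplus>j\<in>S. c j \<otimes> Hm U i j) = \<zero>"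
  let ?t = "s div r"
  have "(\<Oplus>j\<in>S. c j \<otimes> Hm U ?t j) = (\<Oplus>j\<in>S. c j \<otimes> (if j div r = ?t then \<one> else \<zero>))"
    using sg by (simp add: Hm_def)
  also have "\<dots> = (\<Oplus>j\<in>{j\<in>S. j div r = ?t}. c j)" by (rule sum_local[OF fin c])
  also have "{j\<in>S. j div r = ?t} = {s}" using s uniq by auto
  also have "(\<Oplus>j\<in>{s}. c j) = c s" using c s by (simp add: Pi_iff)
  finally have cs: "c s = \<zero>" using z sg by simp
  have S: "S = insert s (S - {s})" using s by auto
  have cc: "c \<in> S - {s} \<rightarrow> carrier F" using c by auto
  have "\<forall>i<g+h. (\<Oplus>j\<in>S - {s}. c j \<otimes> Hm U i j) = \<zero>"
  proof (intro allI impI)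
    fix i assume i: "i < g+h"
    have "(\<Oplus>j\<in>S. c j \<otimes> Hm U i j) = c s \<otimes> Hm U i s \<oplus> (\<Oplus>j\<in>S - {s}. c j \<otimes> Hm U i j)"
      by (subst S, rule finsum_insert) (use fin c U s in \<open>auto simp: Pi_iff Hm_carrier\<close>)
    also have "c s \<otimes> Hm U i s = \<zero>" using cs U by (simp add: Hm_carrier)
    finally show "(\<Oplus>j\<in>S - {s}. c j \<otimes> Hm U i j) = \<zero>"
      using z i cc U by (simp add: Pi_iff Hm_carrier finsum_closed)
  qed
  hence "\<forall>j\<in>S - {s}. c j = \<zero>" using ind cc unfolding indep_def2 by blast
  thus "\<forall>j\<in>S. c j = \<zero>" using cs by blast
qed

lemma ng_le_card: "finite S \<Longrightarrow> ng S \<le> card S"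
  unfolding ng_def by (rule card_image_le)

lemma reduce:
  assumes U: "okU U" and A: "A \<subseteq> {..<g*r}"
    and good: "\<And>S. S \<subseteq> A \<Longrightarrow> nosing S \<Longrightarrow> card S \<le> ng S + h \<Longrightarrow> indep U S"
  shows "S \<subseteq> A \<Longrightarrow> card S \<le> ng S + h \<Longrightarrow> indep U S"
proof (induction "card S" arbitrary: S rule: less_induct)
  case less
  have finS: "finite S" using less.prems(1) A by (meson finite_lessThan finite_subset subset_trans)
  show ?case
  proof (cases "nosing S")
    case True
    thus ?thesis using good less.prems by blast
  next
    case False
    then obtain s where s: "s \<in> S" and uniq: "\<And>j. j \<in> S \<Longrightarrow> j div r = s div r \<Longrightarrow> j = s"
      unfolding nosing_def by blast
    have sg: "s div r < g"
    proof -
      have "s < g*r" using s less.prems(1) A by auto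
      thus ?thesis by (simp add: div_less_iff_less_mult r_pos)
    qed
    have img: "(\<lambda>j. j div r) ` (S - {s}) = (\<lambda>j. j div r) ` S - {s div r}"
      using uniq s by auto
    have ngS: "ng (S - {s}) = ng S - 1"
      unfolding ng_def img using s finS by (simp add: card_Diff_singleton)
    have ng1: "ng S \<ge> 1" unfolding ng_def using s finS by (auto simp: card_gt_0_iff Suc_le_eq)
    have cS: "card (S - {s}) = card S - 1" using s finS by simp
    have "card (S - {s}) < card S" by (rule card_Diff1_less[OF finS s])
    moreover have "S - {s} \<subseteq> A" using less.prems by auto
    moreover have "card (S - {s}) \<le> ng (S - {s}) + h" using less.prems(2) ngS ng1 cS by linarith
    ultimately have "indep U (S - {s})" by (rule less.hyps)
    note X = sing_remove[OF U finS s sg]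
    show ?thesis by (rule X) (use uniq \<open>indep U (S - {s})\<close> in auto)
  qed
qed


definition Dset :: "nat \<Rightarrow> nat set \<Rightarrow> (nat \<Rightarrow> nat) set" where
  "Dset k S = {d \<in> S \<rightarrow>\<^sub>E carrier F. \<forall>t<g. (\<Oplus>j\<in>{j\<in>S. j div r = t}. d j) = (if k div r = t then \<one> else \<zero>)}"

lemma card_Dset:
  assumes finS: "finite S" and Sn: "S \<subseteq> {..<g*r}" and finF: "finite (carrier F)"
  shows "card (Dset k S) \<le> card (carrier F) ^ (card S - ng S)"
proof -
  define G where "G = (\<lambda>j. j div r) ` S"
  define rep where "rep t = Min {j\<in>S. j div r = t}" for t
  define R where "R = rep ` G"
  have rep_in: "rep t \<in> {j\<in>S. j div r = t}" if "t \<in> G" for t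
  proof -
    have ne: "{j\<in>S. j div r = t} \<noteq> {}" using that unfolding G_def by auto
    have fi: "finite {j\<in>S. j div r = t}" using finS by simp
    show ?thesis unfolding rep_def by (rule Min_in[OF fi ne])
  qed
  have RS: "R \<subseteq> S" unfolding R_def using rep_in by auto
  have injrep: "inj_on rep G"
  proof (rule inj_onI)
    fix a b assume "a \<in> G" "b \<in> G" "rep a = rep b"
    thus "a = b" using rep_in[of a] rep_in[of b] by auto
  qed
  have cardR: "card R = ng S" unfolding R_def ng_def G_def[symmetric] using card_image[OF injrep] .
  define \<rho> where "\<rho> d = restrict d (S - R)" for d :: "nat \<Rightarrow> nat"
  have inj: "inj_on \<rho> (Dset k S)"
  proof (rule inj_onI)
    fix d1 d2 assume d1: "d1 \<in> Dset k S" and d2: "d2 \<in> Dset k S" and eq: "\<rho> d1 = \<rho> d2"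
    have off: "d1 x = d2 x" if "x \<in> S - R" for x
      using eq that unfolding \<rho>_def by (metis restrict_apply')
    show "d1 = d2"
    proof (rule ext)
      fix x show "d1 x = d2 x"
      proof (cases "x \<in> S")
        case False
        thus ?thesis using d1 d2 unfolding Dset_def by (auto simp: PiE_def extensional_def)
      next
        case xS: True
        show ?thesis
        proof (cases "x \<in> R")
          case False thus ?thesis using off xS by simp
        next
          case True
          define t where "t = x div r"
          have tG: "t \<in> G" unfolding t_def G_def using xS by simp
          have xrep: "x = rep t" using True rep_in unfolding R_def t_def by auto
          have tg: "t < g"
          proof -
            have "x < g*r" using xS Sn by auto
            thus ?thesis unfolding t_def by (simp add: div_less_iff_less_mult r_pos)
          qed
          define Gt where "Gt = {j\<in>S. j div r = t}"
          have xGt: "x \<in> Gt" unfolding Gt_def t_def using xS by simp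
          have finGt: "finite Gt" unfolding Gt_def using finS by simp
          have rest: "Gt - {x} \<subseteq> S - R"
          proof
            fix j assume j: "j \<in> Gt - {x}"
            have "j \<notin> R"
            proof
              assume "j \<in> R"
              then obtain t' where t': "t' \<in> G" "j = rep t'" unfolding R_def by auto
              hence "j div r = t'" using rep_in by auto
              hence "t' = t" using j unfolding Gt_def by auto
              thus False using t' j xrep by simp
            qed
            thus "j \<in> S - R" using j unfolding Gt_def by auto
          qed
          have c1: "d1 \<in> S \<rightarrow> carrier F" and c2: "d2 \<in> S \<rightarrow> carrier F"
            using d1 d2 unfolding Dset_def by (auto simp: PiE_def)
          have sumeq: "(\<Oplus>j\<in>Gt - {x}. d1 j) = (\<Oplus>j\<in>Gt - {x}. d2 j)"
            by (rule finsum_cong') (use rest off c2 Gt_def in \<open>auto simp: Pi_iff\<close>)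
          have split: "(\<Oplus>j\<in>Gt. d j) = d x \<oplus> (\<Oplus>j\<in>Gt - {x}. d j)" if "d \<in> S \<rightarrow> carrier F" for d
          proof -
            have "Gt = insert x (Gt - {x})" using xGt by auto
            hence "(\<Oplus>j\<in>Gt. d j) = (\<Oplus>j\<in>insert x (Gt - {x}). d j)" by simp
            also have "\<dots> = d x \<oplus> (\<Oplus>j\<in>Gt - {x}. d j)"
              by (rule finsum_insert) (use finGt that xS Gt_def in \<open>auto simp: Pi_iff\<close>)
            finally show ?thesis .
          qed
          have "(\<Oplus>j\<in>Gt. d1 j) = (\<Oplus>j\<in>Gt. d2 j)"
            using d1 d2 tg unfolding Dset_def Gt_def by auto
          hence "d1 x \<oplus> (\<Oplus>j\<in>Gt - {x}. d2 j) = d2 x \<oplus> (\<Oplus>j\<in>Gt - {x}. d2 j)"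
            using split[OF c1] split[OF c2] sumeq by simp
          moreover have "(\<Oplus>j\<in>Gt - {x}. d2 j) \<in> carrier F"
            by (rule finsum_closed) (use c2 Gt_def in \<open>auto simp: Pi_iff\<close>)
          ultimately show ?thesis using c1 c2 xS by (simp add: Pi_iff)
        qed
      qed
    qed
  qed
  have img: "\<rho> ` Dset k S \<subseteq> (S - R) \<rightarrow>\<^sub>E carrier F"
    unfolding \<rho>_def Dset_def by (auto simp: PiE_def Pi_iff)
  have "card (Dset k S) = card (\<rho> ` Dset k S)" using card_image[OF inj] by simp
  also have "\<dots> \<le> card ((S - R) \<rightarrow>\<^sub>E carrier F)"
    by (rule card_mono[OF _ img]) (use finS finF in \<open>simp add: finite_PiE\<close>)
  also have "\<dots> = card (carrier F) ^ card (S - R)" using finS by (simp add: card_PiE)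
  also have "card (S - R) = card S - ng S" using RS finS cardR by (simp add: card_Diff_subset finite_subset)
  finally show ?thesis .
qed


lemma solve_col:
  assumes fin: "finite A" and ck: "ck \<in> carrier F" "ck \<noteq> \<zero>" and Hk: "Hk \<in> carrier F"
    and c: "c \<in> A \<rightarrow> carrier F" and Hj: "Hj \<in> A \<rightarrow> carrier F"
    and z: "ck \<otimes> Hk \<oplus> (\<Oplus>j\<in>A. c j \<otimes> Hj j) = \<zero>"
  shows "Hk = (\<Oplus>j\<in>A. ((\<ominus> (inv ck)) \<otimes> c j) \<otimes> Hj j)"
proof -
  have U: "ck \<in> Units F" using ck field_Units by simp
  have ic: "inv ck \<in> carrier F" using U by simp
  have cH: "(\<lambda>j. c j \<otimes> Hj j) \<in> A \<rightarrow> carrier F" using c Hj by (auto simp: Pi_iff)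
  define Y0 where "Y0 = (\<Oplus>j\<in>A. c j \<otimes> Hj j)"
  have Y0: "Y0 \<in> carrier F" unfolding Y0_def using cH by (rule finsum_closed)
  have e1: "ck \<otimes> Hk = \<ominus> Y0" using sum_zero_eq_neg[of "ck \<otimes> Hk" Y0] z ck Hk Y0 unfolding Y0_def by simp
  have "Hk = inv ck \<otimes> (ck \<otimes> Hk)" using U ic ck Hk by (simp add: m_assoc[symmetric])
  also have "\<dots> = inv ck \<otimes> (\<ominus> Y0)" using e1 by simp
  also have "\<dots> = (\<ominus> (inv ck)) \<otimes> Y0" using ic Y0 by (simp add: l_minus r_minus)
  also have "\<dots> = (\<Oplus>j\<in>A. (\<ominus> (inv ck)) \<otimes> (c j \<otimes> Hj j))"
    unfolding Y0_def by (rule finsum_rdistr[OF fin _ cH]) (use ic in simp)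
  also have "\<dots> = (\<Oplus>j\<in>A. ((\<ominus> (inv ck)) \<otimes> c j) \<otimes> Hj j)"
    by (rule finsum_cong') (use ic c Hj in \<open>auto simp: Pi_iff m_assoc\<close>)
  finally show ?thesis .
qed


definition Good :: "(nat \<Rightarrow> nat \<Rightarrow> nat) \<Rightarrow> nat \<Rightarrow> bool" where
  "Good U k \<longleftrightarrow> (\<forall>S. S \<subseteq> {..<k} \<longrightarrow> nosing S \<longrightarrow> card S \<le> ng S + h \<longrightarrow> indep U S)"

definition Fam :: "nat \<Rightarrow> nat set set" where
  "Fam k = {S. S \<subseteq> {..<k} \<and> nosing (insert k S) \<and> card S + 1 \<le> ng S + h}"

definition Bad :: "(nat \<Rightarrow> nat \<Rightarrow> nat) \<Rightarrow> nat \<Rightarrow> nat set \<Rightarrow> (nat \<Rightarrow> nat) set" where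
  "Bad U k S = (\<lambda>d. \<lambda>i\<in>{..<h}. \<Oplus>j\<in>S. d j \<otimes> U j i) ` Dset k S"

lemma Good_all:
  assumes U: "okU U" and G: "Good U k" and k: "k \<le> g*r"
  shows "S \<subseteq> {..<k} \<Longrightarrow> card S \<le> ng S + h \<Longrightarrow> indep U S"
  by (rule reduce[OF U _ _]) (use G k in \<open>auto simp: Good_def\<close>)

lemma finite_Fam: "finite (Fam k)"
proof -
  have "Fam k \<subseteq> Pow {..<k}" unfolding Fam_def by auto
  thus ?thesis by (rule finite_subset) simp
qed

lemma card_Bad:
  assumes "S \<in> Fam k" "finite (carrier F)" "k < g*r"
  shows "card (Bad U k S) \<le> card (carrier F) ^ (h - 1)"
proof -
  have S: "S \<subseteq> {..<k}" "card S + 1 \<le> ng S + h" using assms(1) unfolding Fam_def by auto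
  have finS: "finite S" using S(1) by (meson finite_lessThan finite_subset)
  have Sn: "S \<subseteq> {..<g*r}" using S(1) assms(3) by auto
  have "0 < card (carrier F)" using assms(2) one_closed by (subst card_gt_0_iff) auto
  hence q1: "card (carrier F) \<ge> 1" by simp
  have "card (Bad U k S) \<le> card (Dset k S)" unfolding Bad_def by (rule card_image_le) (rule finite_subset[of _ "S \<rightarrow>\<^sub>E carrier F"], auto simp: Dset_def intro: finite_PiE finS assms(2))
  also have "\<dots> \<le> card (carrier F) ^ (card S - ng S)" by (rule card_Dset[OF finS Sn assms(2)])
  also have "\<dots> \<le> card (carrier F) ^ (h - 1)" using S(2) q1 by (intro power_increasing) auto
  finally show ?thesis .
qed


lemma exists_good_u:
  assumes finF: "finite (carrier F)" and h1: "h \<ge> 1" and kn: "k < g*r"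
    and cf: "card (Fam k) < card (carrier F)"
  shows "\<exists>u\<in>{..<h} \<rightarrow>\<^sub>E carrier F. \<forall>S\<in>Fam k. u \<notin> Bad U k S"
proof (rule ccontr)
  assume "\<not> ?thesis"
  hence sub: "{..<h} \<rightarrow>\<^sub>E carrier F \<subseteq> (\<Union>S\<in>Fam k. Bad U k S)" by blast
  define q where "q = card (carrier F)"
  have "q ^ h = card ({..<h} \<rightarrow>\<^sub>E carrier F)" unfolding q_def by (simp add: card_PiE)
  also have "\<dots> \<le> card (\<Union>S\<in>Fam k. Bad U k S)"
  proof (rule card_mono[OF _ sub])
    show "finite (\<Union>S\<in>Fam k. Bad U k S)"
    proof (rule finite_UN_I[OF finite_Fam])
      fix S assume "S \<in> Fam k"
      hence "S \<subseteq> {..<k}" unfolding Fam_def by auto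
      hence finS: "finite S" by (meson finite_lessThan finite_subset)
      have "Dset k S \<subseteq> S \<rightarrow>\<^sub>E carrier F" unfolding Dset_def by auto
      hence "finite (Dset k S)" by (rule finite_subset) (use finS finF in \<open>simp add: finite_PiE\<close>)
      thus "finite (Bad U k S)" unfolding Bad_def by simp
    qed
  qed
  also have "\<dots> \<le> (\<Sum>S\<in>Fam k. card (Bad U k S))" by (rule card_UN_le[OF finite_Fam])
  also have "\<dots> \<le> (\<Sum>S\<in>Fam k. q ^ (h - 1))" unfolding q_def
    by (rule sum_mono) (rule card_Bad[OF _ finF kn])
  also have "\<dots> = card (Fam k) * q ^ (h - 1)" by simp
  also have "\<dots> < q * q ^ (h - 1)"
  proof -
    have "q > 0" using cf unfolding q_def by simp
    thus ?thesis using cf unfolding q_def by simp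
  qed
  also have "q * q ^ (h - 1) = q ^ h" using h1 by (simp add: power_eq_if)
  finally show False by simp
qed


lemma step:
  assumes U: "okU U" and G: "Good U k" and kn: "k < g*r"
    and u: "u \<in> {..<h} \<rightarrow>\<^sub>E carrier F" and nb: "\<forall>S\<in>Fam k. u \<notin> Bad U k S"
  defines "U' \<equiv> U(k := (\<lambda>i. if i < h then u i else \<zero>))"
  shows "okU U' \<and> Good U' (k+1)"
proof
  show U': "okU U'" using U u unfolding okU_def U'_def by (auto simp: PiE_def Pi_iff)
  have Gall: "indep U S" if "S \<subseteq> {..<k}" "card S \<le> ng S + h" for S
    using Good_all[OF U G] kn that by simp
  show "Good U' (k+1)" unfolding Good_def
  proof (intro allI impI)
    fix S assume S: "S \<subseteq> {..<k+1}" and ns: "nosing S" and cS: "card S \<le> ng S + h"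
    have finS: "finite S" using S by (meson finite_lessThan finite_subset)
    show "indep U' S"
    proof (cases "k \<in> S")
      case False
      have Sk: "S \<subseteq> {..<k}"
      proof
        fix x assume "x \<in> S"
        thus "x \<in> {..<k}" using S False by (cases "x = k") auto
      qed
      hence "indep U S" using G ns cS unfolding Good_def by blast
      moreover have "indep U S = indep U' S"
        by (rule indep_cong[OF U U']) (use False in \<open>auto simp: U'_def\<close>)
      ultimately show ?thesis by simp
    next
      case True
      define S' where "S' = S - {k}"
      have S'k: "S' \<subseteq> {..<k}" using S unfolding S'_def by auto
      have finS': "finite S'" using finS unfolding S'_def by simp
      have kS': "k \<notin> S'" unfolding S'_def by simp
      have SS': "S = insert k S'" using True unfolding S'_def by auto
      obtain j' where j': "j' \<in> S" "j' \<noteq> k" "j' div r = k div r" using ns True unfolding nosing_def by blast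
      have j'S': "j' \<in> S'" using j' unfolding S'_def by simp
      have kin: "k div r \<in> (\<lambda>j. j div r) ` S'" using j'S' j'(3) by (metis image_eqI)
      have imgeq: "(\<lambda>j. j div r) ` S = (\<lambda>j. j div r) ` S'"
        unfolding SS' image_insert using kin by (rule insert_absorb)
      have ngeq: "ng S = ng S'" unfolding ng_def imgeq ..
      have cardS: "card S = card S' + 1" unfolding SS' using finS' kS' by simp
      have Fm: "S' \<in> Fam k" unfolding Fam_def using S'k ns SS' cS cardS ngeq by auto
      have indS': "indep U S'" using Gall[OF S'k] cS cardS ngeq by simp
      have HmS': "Hm U' i j = Hm U i j" if "j \<in> S'" for i j
        using that S'k unfolding U'_def Hm_def by auto
      have kg: "k div r < g" using kn by (simp add: div_less_iff_less_mult r_pos)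
      show ?thesis unfolding indep_def2
      proof (intro allI impI)
        fix c assume c: "c \<in> S \<rightarrow> carrier F" and z: "\<forall>i<g+h. (\<Oplus>j\<in>S. c j \<otimes> Hm U' i j) = \<zero>"
        have c': "c \<in> S' \<rightarrow> carrier F" using c unfolding S'_def by auto
        have ck: "c k \<in> carrier F" using c True by auto
        have splt: "(\<Oplus>j\<in>S. c j \<otimes> Hm U' i j) = c k \<otimes> Hm U' i k \<oplus> (\<Oplus>j\<in>S'. c j \<otimes> Hm U i j)" for i
        proof -
          have "(\<Oplus>j\<in>S. c j \<otimes> Hm U' i j) = c k \<otimes> Hm U' i k \<oplus> (\<Oplus>j\<in>S'. c j \<otimes> Hm U' i j)"
            unfolding SS' by (rule finsum_insert[OF finS' kS']) (use c' ck U' in \<open>auto simp: Pi_iff Hm_carrier\<close>)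
          also have "(\<Oplus>j\<in>S'. c j \<otimes> Hm U' i j) = (\<Oplus>j\<in>S'. c j \<otimes> Hm U i j)"
            by (rule finsum_cong') (use c' U HmS' in \<open>auto simp: Pi_iff Hm_carrier\<close>)
          finally show ?thesis .
        qed
        show "\<forall>j\<in>S. c j = \<zero>"
        proof (cases "c k = \<zero>")
          case True
          have "\<forall>i<g+h. (\<Oplus>j\<in>S'. c j \<otimes> Hm U i j) = \<zero>"
          proof (intro allI impI)
            fix i assume i: "i < g+h"
            have "(\<Oplus>j\<in>S'. c j \<otimes> Hm U i j) \<in> carrier F"
              by (rule finsum_closed) (use c' U in \<open>auto simp: Pi_iff Hm_carrier\<close>)
            thus "(\<Oplus>j\<in>S'. c j \<otimes> Hm U i j) = \<zero>" using z i splt[of i] True U' by (simp add: Hm_carrier)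
          qed
          hence "\<forall>j\<in>S'. c j = \<zero>" using indS' c' unfolding indep_def2 by blast
          thus ?thesis using True unfolding SS' by auto
        next
          case False
          define d where "d = (\<lambda>j\<in>S'. (\<ominus> (inv (c k))) \<otimes> c j)"
          have U0: "c k \<in> Units F" using ck False field_Units by simp
          have ick: "inv (c k) \<in> carrier F" using U0 by simp
          have dS: "d \<in> S' \<rightarrow>\<^sub>E carrier F" unfolding d_def using c' ick by (auto simp: Pi_iff)
          have dc: "d \<in> S' \<rightarrow> carrier F" using dS by (auto simp: PiE_def)
          have col: "Hm U' i k = (\<Oplus>j\<in>S'. d j \<otimes> Hm U i j)" if i: "i < g+h" for i
          proof -
            have "Hm U' i k = (\<Oplus>j\<in>S'. ((\<ominus> (inv (c k))) \<otimes> c j) \<otimes> Hm U i j)"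
              by (rule solve_col[OF finS' ck False]) (use U' U c' z splt i in \<open>auto simp: Hm_carrier\<close>)
            also have "\<dots> = (\<Oplus>j\<in>S'. d j \<otimes> Hm U i j)"
              by (rule finsum_cong') (use c' ick U in \<open>auto simp: Pi_iff Hm_carrier d_def\<close>)
            finally show ?thesis .
          qed
          have "d \<in> Dset k S'"
            unfolding Dset_def
          proof (intro CollectI conjI allI impI)
            show "d \<in> S' \<rightarrow>\<^sub>E carrier F" by (rule dS)
            fix t assume t: "t < g"
            have "(if k div r = t then \<one> else \<zero>) = Hm U' t k" using t unfolding Hm_def by simp
            also have "\<dots> = (\<Oplus>j\<in>S'. d j \<otimes> Hm U t j)" using col t by simp
            also have "\<dots> = (\<Oplus>j\<in>S'. d j \<otimes> (if j div r = t then \<one> else \<zero>))"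
              using t unfolding Hm_def by simp
            also have "\<dots> = (\<Oplus>j\<in>{j\<in>S'. j div r = t}. d j)" by (rule sum_local[OF finS' dc])
            finally show "(\<Oplus>j\<in>{j\<in>S'. j div r = t}. d j) = (if k div r = t then \<one> else \<zero>)" by simp
          qed
          moreover have "u = (\<lambda>i\<in>{..<h}. \<Oplus>j\<in>S'. d j \<otimes> U j i)"
          proof (rule ext)
            fix i show "u i = (\<lambda>i\<in>{..<h}. \<Oplus>j\<in>S'. d j \<otimes> U j i) i"
            proof (cases "i < h")
              case True
              have "u i = Hm U' (g+i) k" using True unfolding Hm_def U'_def by simp
              also have "\<dots> = (\<Oplus>j\<in>S'. d j \<otimes> Hm U (g+i) j)" using col True by simp
              also have "\<dots> = (\<Oplus>j\<in>S'. d j \<otimes> U j i)" unfolding Hm_def by simp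
              finally show ?thesis using True by simp
            next
              case False
              thus ?thesis using u by (auto simp: PiE_def extensional_def)
            qed
          qed
          ultimately have "u \<in> Bad U k S'" unfolding Bad_def by blast
          thus ?thesis using nb Fm by blast
        qed
      qed
    qed
  qed
qed


lemma construct:
  assumes finF: "finite (carrier F)" and h1: "h \<ge> 1"
    and cf: "\<And>k. k < g*r \<Longrightarrow> card (Fam k) < card (carrier F)"
  shows "k \<le> g*r \<Longrightarrow> \<exists>U. okU U \<and> Good U k"
proof (induction k)
  case 0
  have "okU (\<lambda>_ _. \<zero>)" unfolding okU_def by simp
  moreover have "Good (\<lambda>_ _. \<zero>) 0" unfolding Good_def indep_def2 by auto
  ultimately show ?case by blast
next
  case (Suc k)
  then obtain U where U: "okU U" "Good U k" by auto
  have kn: "k < g*r" using Suc.prems by simp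
  obtain u where u: "u \<in> {..<h} \<rightarrow>\<^sub>E carrier F" "\<forall>S\<in>Fam k. u \<notin> Bad U k S"
    using exists_good_u[OF finF h1 kn cf[OF kn]] by blast
  show ?case using step[OF U kn u] by auto
qed

lemma MR_final:
  assumes U: "okU U" and G: "Good U (g*r)" and gh: "g + h < g*r"
  shows "MR_LRC F g r h 1 (Hm U)"
  unfolding MR_LRC_def
proof (intro conjI allI impI)
  show "g * 1 + h < g * r" using gh by simp
  show "\<And>i j. i < g * 1 + h \<Longrightarrow> j < g * r \<Longrightarrow> Hm U i j \<in> carrier F" using U by (simp add: Hm_carrier)
  show "\<And>i j. i < g * 1 \<Longrightarrow> j < g * r \<Longrightarrow> j div r \<noteq> i div 1 \<Longrightarrow> Hm U i j = \<zero>"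
    by (simp add: Hm_def)
  fix t assume t: "t < g"
  show "generates_MDS F r 1 (\<lambda>s j. Hm U (t * 1 + s) (t * r + j))"
    unfolding generates_MDS_def
  proof (intro allI impI)
    fix x :: "nat \<Rightarrow> nat" assume x: "x \<in> {..<1} \<rightarrow> carrier F" and nz: "\<exists>s<1. x s \<noteq> \<zero>"
    have x0: "x 0 \<in> carrier F" "x 0 \<noteq> \<zero>" using x nz by auto
    have "{j. j < r \<and> (\<Oplus>s\<in>{..<1}. x s \<otimes> Hm U (t * 1 + s) (t * r + j)) \<noteq> \<zero>} = {..<r}"
    proof -
      have "(\<Oplus>s\<in>{..<1}. x s \<otimes> Hm U (t * 1 + s) (t * r + j)) = x 0" if "j < r" for j
      proof -
        have "(t * r + j) div r = t" using that r_pos by simp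
        hence "Hm U t (t * r + j) = \<one>" using t unfolding Hm_def by simp
        moreover have "{..<1::nat} = {0}" by auto
        ultimately show ?thesis using x0 U by (simp add: Hm_carrier)
      qed
      thus ?thesis using x0 by auto
    qed
    thus "r - 1 + 1 \<le> card {j. j < r \<and> (\<Oplus>s\<in>{..<1}. x s \<otimes> Hm U (t * 1 + s) (t * r + j)) \<noteq> \<zero>}"
      using r_pos by simp
  qed
next
  fix S :: "nat set" assume S: "S \<subseteq> {..<g * r} \<and> card S = g * 1 + h \<and> (\<forall>t<g. 1 \<le> card (S \<inter> group r t))"
  have finS: "finite S" using S by (meson finite_lessThan finite_subset)
  have img: "(\<lambda>j. j div r) ` S = {..<g}"
  proof
    show "(\<lambda>j. j div r) ` S \<subseteq> {..<g}" using S r_pos by (auto simp: div_less_iff_less_mult)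
    show "{..<g} \<subseteq> (\<lambda>j. j div r) ` S"
    proof
      fix t assume "t \<in> {..<g}"
      hence "card (S \<inter> group r t) \<ge> 1" using S by auto
      hence "S \<inter> group r t \<noteq> {}" by auto
      then obtain j where j: "j \<in> S" "j \<in> group r t" by auto
      hence "j div r = t" unfolding group_def using r_pos
        by (auto simp: div_nat_eqI mult.commute)
      thus "t \<in> (\<lambda>j. j div r) ` S" using j by force
    qed
  qed
  have "ng S = g" unfolding ng_def img by simp
  hence "card S \<le> ng S + h" using S by simp
  hence "indep U S" using Good_all[OF U G] S by auto
  thus "cols_lin_indep F (g * 1 + h) (Hm U) S" unfolding indep_def by simp
qed


lemma card_Fam_pow: "card (Fam k) \<le> 2^k"
proof -
  have "Fam k \<subseteq> Pow {..<k}" unfolding Fam_def by auto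
  hence "card (Fam k) \<le> card (Pow {..<k})" by (rule card_mono[rotated]) simp
  thus ?thesis by (simp add: card_Pow)
qed

definition Tf :: "nat set set" where
  "Tf = {T. T \<subseteq> {..<g*r} \<and> nosing T \<and> card T \<le> ng T + h}"

lemma card_Fam_Tf: assumes "k < g*r" shows "card (Fam k) \<le> card Tf"
proof -
  have inj: "inj_on (insert k) (Fam k)"
  proof (rule inj_onI)
    fix A B assume "A \<in> Fam k" "B \<in> Fam k" "insert k A = insert k B"
    moreover have "k \<notin> A" "k \<notin> B" using \<open>A \<in> Fam k\<close> \<open>B \<in> Fam k\<close> unfolding Fam_def by auto
    ultimately show "A = B" by (metis insert_ident)
  qed
  have sub: "insert k ` Fam k \<subseteq> Tf"
  proof
    fix T assume "T \<in> insert k ` Fam k"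
    then obtain S where S: "S \<in> Fam k" "T = insert k S" by auto
    have Sk: "S \<subseteq> {..<k}" and ns: "nosing (insert k S)" and cS: "card S + 1 \<le> ng S + h"
      using S(1) unfolding Fam_def by auto
    have finS: "finite S" using Sk by (meson finite_lessThan finite_subset)
    have kS: "k \<notin> S" using Sk by auto
    obtain j' where j': "j' \<in> insert k S" "j' \<noteq> k" "j' div r = k div r" using ns unfolding nosing_def by blast
    have j'S: "j' \<in> S" using j' by simp
    have kin: "k div r \<in> (\<lambda>j. j div r) ` S" using j'S j'(3) by (metis image_eqI)
    have "ng (insert k S) = ng S" unfolding ng_def image_insert using kin by (simp add: insert_absorb)
    moreover have "card (insert k S) = card S + 1" using finS kS by simp
    ultimately show "T \<in> Tf" unfolding Tf_def using S(2) Sk assms ns cS by auto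
  qed
  have "card (Fam k) = card (insert k ` Fam k)" using card_image[OF inj] by simp
  also have "\<dots> \<le> card Tf"
  proof (rule card_mono[OF _ sub])
    have "Tf \<subseteq> Pow {..<g*r}" unfolding Tf_def by auto
    thus "finite Tf" by (rule finite_subset) simp
  qed
  finally show ?thesis .
qed


lemma card_Tf: "card Tf \<le> (g*r+1)^h * r^h"
proof -
  define n where "n = g*r"
  define Vs where "Vs = {V. V \<subseteq> {..<n} \<and> card V \<le> h}"
  define gs where "gs t = {t*r..<t*r+r}" for t
  define im where "im V = (\<lambda>j. j div r) ` V" for V :: "nat set"
  define \<Phi> where "\<Phi> p = fst p \<union> snd p ` im (fst p)" for p :: "nat set \<times> (nat \<Rightarrow> nat)"
  define \<Sigma> where "\<Sigma> = (SIGMA V:Vs. PiE (im V) gs)"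
  have gs_iff: "j \<in> gs t \<longleftrightarrow> j div r = t" for j t
  proof
    assume "j \<in> gs t"
    hence "t*r \<le> j" "j < t*r + r" unfolding gs_def by auto
    thus "j div r = t" using r_pos by (metis add.commute div_nat_eqI mult.commute mult_Suc_right)
  next
    assume "j div r = t"
    thus "j \<in> gs t" unfolding gs_def using r_pos
      by (metis (no_types, lifting) add.commute atLeastLessThan_iff div_mult_mod_eq le_add2 mod_less_divisor mult.commute nat_add_left_cancel_less)
  qed
  have finVs: "finite Vs" unfolding Vs_def by (rule finite_subset[of _ "Pow {..<n}"]) auto
  have sub: "Tf \<subseteq> \<Phi> ` \<Sigma>"
  proof
    fix T assume T: "T \<in> Tf"
    have Tn: "T \<subseteq> {..<n}" and ns: "nosing T" and cT: "card T \<le> ng T + h" using T unfolding Tf_def n_def by auto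
    have finT: "finite T" using Tn by (meson finite_lessThan finite_subset)
    define rep where "rep t = Min {j\<in>T. j div r = t}" for t
    have rep_in: "rep t \<in> {j\<in>T. j div r = t}" if "t \<in> im T" for t
    proof -
      have ne: "{j\<in>T. j div r = t} \<noteq> {}" using that unfolding im_def by auto
      have fi: "finite {j\<in>T. j div r = t}" using finT by simp
      show ?thesis unfolding rep_def by (rule Min_in[OF fi ne])
    qed
    define R where "R = rep ` im T"
    have RT: "R \<subseteq> T" unfolding R_def using rep_in by auto
    have injrep: "inj_on rep (im T)"
    proof (rule inj_onI)
      fix a b assume "a \<in> im T" "b \<in> im T" "rep a = rep b"
      thus "a = b" using rep_in[of a] rep_in[of b] by auto
    qed
    have cardR: "card R = ng T" unfolding R_def ng_def im_def[symmetric] using card_image[OF injrep] .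
    define V where "V = T - R"
    have imV: "im V = im T"
    proof
      show "im V \<subseteq> im T" unfolding im_def V_def by auto
      show "im T \<subseteq> im V"
      proof
        fix t assume t: "t \<in> im T"
        then obtain j where j: "j \<in> T" "j div r = t" unfolding im_def by auto
        obtain j' where j': "j' \<in> T" "j' \<noteq> j" "j' div r = j div r" using ns j unfolding nosing_def by blast
        have "j \<notin> R \<or> j' \<notin> R"
        proof (rule ccontr)
          assume "\<not> (j \<notin> R \<or> j' \<notin> R)"
          then obtain a b where "a \<in> im T" "j = rep a" "b \<in> im T" "j' = rep b" unfolding R_def by auto
          hence "a = t" "b = t" using rep_in j j' by auto
          thus False using \<open>j = rep a\<close> \<open>j' = rep b\<close> j' by simp
        qed
        thus "t \<in> im V"
        proof
          assume "j \<notin> R"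
          hence "j \<in> V" unfolding V_def using j by simp
          thus ?thesis unfolding im_def using j(2) by (metis image_eqI)
        next
          assume "j' \<notin> R"
          hence "j' \<in> V" unfolding V_def using j' by simp
          thus ?thesis unfolding im_def using j(2) j'(3) by (metis image_eqI)
        qed
      qed
    qed
    define f where "f = restrict rep (im V)"
    have "(V, f) \<in> \<Sigma>"
      unfolding \<Sigma>_def
    proof (rule SigmaI)
      have "card V = card T - ng T" unfolding V_def using RT finT cardR by (simp add: card_Diff_subset finite_subset)
      hence "card V \<le> h" using cT by simp
      thus "V \<in> Vs" unfolding Vs_def V_def using Tn by auto
      show "f \<in> PiE (im V) gs" unfolding f_def imV using rep_in gs_iff by auto
    qed
    moreover have "\<Phi> (V, f) = T"
    proof -
      have "f ` im V = R" unfolding f_def R_def imV by simp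
      thus ?thesis unfolding \<Phi>_def V_def using RT by auto
    qed
    ultimately show "T \<in> \<Phi> ` \<Sigma>" by (metis image_eqI)
  qed
  have finSig: "finite \<Sigma>" unfolding \<Sigma>_def
  proof (rule finite_SigmaI[OF finVs])
    fix V assume V: "V \<in> Vs"
    have "V \<subseteq> {..<n}" using V unfolding Vs_def by simp
    hence finV: "finite V" by (rule finite_subset) simp
    show "finite (PiE (im V) gs)" by (rule finite_PiE) (use finV in \<open>auto simp: im_def gs_def\<close>)
  qed
  have "card Tf \<le> card (\<Phi> ` \<Sigma>)"
    by (rule card_mono[OF _ sub]) (use finSig in simp)
  also have "\<dots> \<le> card \<Sigma>" by (rule card_image_le[OF finSig])
  also have "card \<Sigma> = (\<Sum>V\<in>Vs. card (PiE (im V) gs))"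
    unfolding \<Sigma>_def by (rule card_SigmaI[OF finVs]) (auto simp: gs_def im_def Vs_def intro!: finite_PiE finite_imageI elim: finite_subset)
  also have "\<dots> \<le> (\<Sum>V\<in>Vs. r^h)"
  proof (rule sum_mono)
    fix V assume V: "V \<in> Vs"
    have "V \<subseteq> {..<n}" using V unfolding Vs_def by simp
    hence finV: "finite V" by (rule finite_subset) simp
    have "card (PiE (im V) gs) = (\<Prod>t\<in>im V. card (gs t))" using finV unfolding im_def by (simp add: card_PiE)
    also have "\<dots> = r ^ card (im V)" unfolding gs_def by simp
    also have "\<dots> \<le> r ^ h"
    proof (rule power_increasing)
      have "card (im V) \<le> card V" unfolding im_def using finV by (rule card_image_le)
      thus "card (im V) \<le> h" using V unfolding Vs_def by simp
    qed (use r_pos in simp)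
    finally show "card (PiE (im V) gs) \<le> r^h" .
  qed
  also have "\<dots> = card Vs * r^h" by simp
  also have "\<dots> \<le> (n+1)^h * r^h" unfolding Vs_def by (intro mult_right_mono card_small_subsets) simp
  finally show ?thesis unfolding n_def .
qed

end

lemma prime_field_exists:
  assumes "nprime p"
  shows "\<exists>F::nat ring. field F \<and> finite (carrier F) \<and> card (carrier F) = p"
proof -
  interpret residues_prime p "residue_ring (int p)" by unfold_locales (use assms in auto)
  have inj: "inj_on nat (carrier (residue_ring (int p)))"
    by (auto simp: res_carrier_eq inj_on_def)
  have "field (image_ring nat (residue_ring (int p)))"
    by (rule inj_imp_image_ring_is_field[OF inj])
  moreover have "card (carrier (image_ring nat (residue_ring (int p)))) = p"
    unfolding image_ring_carrier using card_image[OF inj] by (simp add: res_carrier_eq)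
  moreover have "finite (carrier (image_ring nat (residue_ring (int p))))"
    unfolding image_ring_carrier by (simp add: res_carrier_eq)
  ultimately show ?thesis by blast
qed

theorem theorem3p10:
  shows "\<exists>C::real. C > 0 \<and>
    (\<forall>r h g :: nat. 0 < r \<longrightarrow> 0 < h \<longrightarrow> 0 < g \<longrightarrow> g + h < g * r \<longrightarrow>
      (\<exists>(F :: nat ring) H. field F \<and> finite (carrier F) \<and> MR_LRC F g r h 1 H \<and>
         real (card (carrier F)) \<le>
           (max (C * real g * (1 + ln (real g)) powr C) (2 ^ r)) ^ (min h g)))"
proof (intro exI[of _ "1024::real"] conjI allI impI)
  show "(0::real) < 1024" by simp
  fix r h g :: nat
  assume r: "0 < r" and h: "0 < h" and g: "0 < g" and gh: "g + h < g * r"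
  define n where "n = g*r"
  have n1: "n \<ge> 1" unfolding n_def using r g by simp
  define M where "M = (if h < g then ((n+1)*r)^h else 2^(n-1))"
  have M1: "M \<ge> 1" unfolding M_def using r by simp
  obtain p where p: "nprime p" "M < p" "p \<le> 2*M" using bertrand[OF M1] by blast
  obtain F :: "nat ring" where F: "field F" "finite (carrier F)" "card (carrier F) = p"
    using prime_field_exists[OF p(1)] by blast
  have mrcF: "mrc F g r" unfolding mrc_def mrc_axioms_def using F(1) r g by simp
  interpret mrc F g r h by (rule mrcF)
  have cf: "card (Fam k) < card (carrier F)" if k: "k < g*r" for k
  proof (cases "h < g")
    case True
    have "card (Fam k) \<le> card Tf" by (rule card_Fam_Tf[OF k])
    also have "\<dots> \<le> (g*r+1)^h * r^h" by (rule card_Tf)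
    also have "\<dots> = ((g*r+1)*r)^h" by (rule power_mult_distrib[symmetric])
    also have "\<dots> = M" unfolding M_def n_def using True by simp
    finally show ?thesis using p F by simp
  next
    case False
    have "card (Fam k) \<le> 2^k" by (rule card_Fam_pow)
    also have "(2::nat)^k \<le> 2^(n-1)" using k unfolding n_def by (intro power_increasing) auto
    also have "\<dots> = M" unfolding M_def using False by simp
    finally show ?thesis using p F by simp
  qed
  obtain U where U: "okU U" "Good U (g*r)"
    using construct[OF F(2) _ cf, of "g*r"] h by auto
  have MR: "MR_LRC F g r h 1 (Hm U)" by (rule MR_final[OF U gh])
  define B where "B = max (1024 * real g * (1 + ln (real g)) powr 1024) (2 ^ r)"
  have "real (card (carrier F)) \<le> real (2*M)" using p F by simp
  also have "\<dots> \<le> B ^ (min h g)"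
  proof (cases "h < g")
    case True
    have mn: "min h g = h" using True by simp
    have a: "(n+1)*r \<le> 2*g*r^2"
    proof -
      have "n + 1 \<le> 2*n" using n1 by simp
      hence "(n+1)*r \<le> (2*n)*r" by simp
      thus ?thesis unfolding n_def by (simp add: power2_eq_square algebra_simps)
    qed
    have "2*M = 2 * ((n+1)*r)^h" unfolding M_def using True by simp
    also have "\<dots> \<le> 2^h * ((n+1)*r)^h"
    proof (rule mult_right_mono)
      show "(2::nat) \<le> 2^h" using power_increasing[of 1 h "2::nat"] h by simp
    qed simp
    also have "\<dots> = (2*((n+1)*r))^h" by (rule power_mult_distrib[symmetric])
    also have "\<dots> \<le> (4*g*r^2)^h" using a by (intro power_mono) auto
    finally have "real (2*M) \<le> real ((4*g*r^2)^h)" by linarith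
    also have "\<dots> = (4 * real g * real r ^ 2)^h" by simp
    also have "\<dots> \<le> B^h" unfolding B_def
      by (intro power_mono base_bound) (use g r in auto)
    finally show ?thesis using mn by simp
  next
    case False
    have mn: "min h g = g" using False by simp
    have "2*M = 2 * 2^(n-1)" unfolding M_def using False by simp
    also have "\<dots> = 2^(Suc (n-1))" by simp
    also have "Suc (n-1) = r*g" unfolding n_def using n1 n_def by simp
    also have "(2::nat)^(r*g) = (2^r)^g" by (rule power_mult)
    finally have "real (2*M) = (2^r)^g" by simp
    also have "\<dots> \<le> B^g" unfolding B_def by (intro power_mono) auto
    finally show ?thesis using mn by simp
  qed
  finally show "\<exists>(F :: nat ring) H. field F \<and> finite (carrier F) \<and> MR_LRC F g r h 1 H \<and>
         real (card (carrier F)) \<le>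
           (max (1024 * real g * (1 + ln (real g)) powr 1024) (2 ^ r)) ^ (min h g)"
    using F MR unfolding B_def by blast
qed

end
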